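(* Let $n$ be an odd integer, $q=2^n$, and let $i$ be a positive integer with $\gcd(i,n)=1$. Let $d$ be an integer with $d\equiv\frac{2^i+1}{3}\pmod{2^n-1}$, i.e. $3d\equiv 2^i+1\pmod{2^n-1}$. Then for every $u\in\mathrm{GF}(q)\setminus\mathrm{GF}(2)$ the cubic equation \[\big(u^dx+(1+u)^d\big)^3+x^3+1=0\] has a unique solution $x\in\mathrm{GF}(2^n)$.
   Context: Since $n$ is odd, $\gcd(3,2^n-1)=1$, so $\frac{2^i+1}{3}$ denotes $(2^i+1)$ times the inverse of $3$ modulo $2^n-1$. *)

theory Defs
  imports "HOL-Number_Theory.Number_Theory"
begin

end

theory Submission
  imports Defs
begin

lemma ff_fermat:
  fixes x :: "'a::{field,finite}"
  assumes "x \<noteq> 0"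
  shows "x ^ (card (UNIV::'a set) - 1) = 1"
proof -
  have "(\<Prod>y\<in>UNIV-{0}. x * y) = x ^ card (UNIV - {0::'a}) * \<Prod>(UNIV-{0::'a})"
    by (simp add: prod.distrib)
  also have "card (UNIV - {0::'a}) = card (UNIV::'a set) - 1"
    by (simp add: card_Diff_singleton)
  also have "(\<Prod>y\<in>UNIV-{0}. x * y) = (\<Prod>y\<in>UNIV-{0::'a}. y)"
    by (rule prod.reindex_bij_witness[of _ "\<lambda>y. y / x" "\<lambda>y. x * y"]) (use assms in auto)
  finally have "\<Prod>(UNIV-{0::'a}) * 1 = \<Prod>(UNIV-{0::'a}) * x ^ (card (UNIV::'a set) - 1)"
    by (simp add: mult.commute)
  moreover have "\<Prod>(UNIV-{0::'a}) \<noteq> 0" by simp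
  ultimately show ?thesis by (metis mult_left_cancel)
qed

lemma ff_char2:
  assumes "card (UNIV :: 'a::{field,finite} set) = 2 ^ n" "odd n"
  shows "(2::'a) = 0"
proof -
  have n0: "n > 0" using assms(2) by (cases n) auto
  have "(-1::'a) ^ (2^n - 1) = 1" using ff_fermat[of "-1::'a"] assms by simp
  moreover have "odd (2^n - 1 :: nat)" using n0 by (simp add: odd_pos)
  ultimately have "(-1::'a) = 1" by simp
  then have "(1::'a) + 1 = 0" by (metis add.right_inverse)
  then show ?thesis by simp
qed

lemma c2_add_self: "(2::'a::field) = 0 \<Longrightarrow> x + x = (0::'a)"
  by (metis mult_2 mult_zero_left)

lemma c2_neg: "(2::'a::field) = 0 \<Longrightarrow> - x = (x::'a)"
  by (metis add_eq_0_iff c2_add_self)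

lemma c2_eqI: "(2::'a::field) = 0 \<Longrightarrow> x = y + 2 * z \<Longrightarrow> x = (y::'a)"
  by simp

lemma c2_sq: "(2::'a::field) = 0 \<Longrightarrow> (x + y)^2 = x^2 + (y::'a)^2"
  by (simp add: power2_sum)

lemma c2_frob: "(2::'a::field) = 0 \<Longrightarrow> (x + y)^(2^k) = x^(2^k) + (y::'a)^(2^k)"
proof (induction k)
  case 0 then show ?case by simp
next
  case (Suc k)
  have "(x + y)^(2^Suc k) = ((x+y)^(2^k))^2" by (simp add: power_mult[symmetric] mult.commute)
  also have "\<dots> = (x^(2^k))^2 + (y^(2^k))^2" using Suc by (simp add: c2_sq)
  also have "\<dots> = x^(2^Suc k) + y^(2^Suc k)" by (simp add: power_mult[symmetric] mult.commute)
  finally show ?case .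
qed

lemma c2_minus: "(2::'a::field) = 0 \<Longrightarrow> x + y = 0 \<Longrightarrow> x = (y::'a)"
  by (metis add_eq_0_iff c2_neg)

lemma ff_pow_card:
  fixes x :: "'a::{field,finite}"
  assumes "card (UNIV :: 'a set) = 2 ^ n" "n > 0"
  shows "x ^ (2^n) = x"
proof (cases "x = 0")
  case True then show ?thesis using assms by simp
next
  case False
  have "x ^ (2^n) = x * x ^ (2^n - 1)" by (metis power_Suc Suc_pred' pos2 zero_less_power)
  then show ?thesis using ff_fermat[OF False] assms by simp
qed

lemma ff_pow_iter:
  fixes x :: "'a::{field,finite}"
  assumes "card (UNIV :: 'a set) = 2 ^ n" "n > 0"
  shows "x ^ (2^(m*n)) = x"
proof (induction m)
  case 0 then show ?case by simp
next
  case (Suc m)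
  have e: "2^(Suc m * n) = 2^(m*n) * (2::nat)^n" by (simp add: power_add)
  have "x ^ (2^(Suc m * n)) = (x ^ (2^(m*n))) ^ (2^n)" unfolding e by (rule power_mult)
  then show ?case using Suc ff_pow_card[OF assms] by simp
qed

lemma pow_iter_j:
  fixes x :: "'a::field"
  assumes "x ^ (2^j) = x"
  shows "x ^ (2^(j*k)) = x"
proof (induction k)
  case 0 then show ?case by simp
next
  case (Suc k)
  have e: "2^(j * Suc k) = 2^(j*k) * (2::nat)^j" by (simp add: power_add mult.commute)
  have "x ^ (2^(j * Suc k)) = (x ^ (2^(j*k))) ^ (2^j)" unfolding e by (rule power_mult)
  then show ?case using Suc assms by simp
qed

lemma ff_fix:
  fixes x :: "'a::{field,finite}"
  assumes "card (UNIV :: 'a set) = 2 ^ n" "n > 0" "coprime j n" "x ^ (2^j) = x"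
  shows "x = 0 \<or> x = 1"
proof -
  have "x^2 = x"
  proof (cases "n = 1")
    case True then show ?thesis using ff_pow_card[OF assms(1,2), of x] by simp
  next
    case False
    obtain k where "[j * k = Suc 0] (mod n)" using cong_solve_coprime_nat[OF assms(3)] by blast
    then have "[j * k = 1] (mod n)" by simp
    then obtain m where jk: "j * k = 1 + m * n" using False unfolding cong_to_1'_nat by auto
    have "x = x ^ (2^(j*k))" using pow_iter_j[OF assms(4)] by simp
    also have "2^(j*k) = 2^(m*n) * (2::nat)" by (simp add: jk)
    also have "x ^ (2^(m*n) * 2) = (x ^ (2^(m*n)))^2" by (rule power_mult)
    also have "\<dots> = x^2" using ff_pow_iter[OF assms(1,2)] by simp
    finally show ?thesis by simp
  qed
  then have "x * (x - 1) = 0" by (simp add: algebra_simps power2_eq_square)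
  then show ?thesis by simp
qed


lemma three_dvd:
  assumes "odd (n::nat)"
  shows "3 * ((4::nat)^((n+1) div 2) div 3) = 2^(n+1) - 1"
proof -
  define m where "m = (n+1) div 2"
  have nm: "n + 1 = 2 * m" using assms unfolding m_def by presburger
  have "(4::nat)^m mod 3 = (4 mod 3)^m mod 3" by (rule power_mod[symmetric])
  then have md: "(4::nat)^m mod 3 = 1" by simp
  have "(4::nat)^m - (4::nat)^m mod 3 = 3 * (4^m div 3)" by (rule minus_mod_eq_mult_div)
  moreover have "(2::nat)^(n+1) = 4^m"
  proof -
    have "(2::nat)^(n+1) = 2^(2*m)" by (simp only: nm)
    also have "\<dots> = 4^m" by (simp add: power_mult)
    finally show ?thesis .
  qed
  ultimately show ?thesis using md by (simp add: m_def)
qed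

lemma ff_pow_2n1:
  fixes x :: "'a::{field,finite}"
  assumes "card (UNIV :: 'a set) = 2 ^ n" "n > 0"
  shows "x ^ (2^(n+1) - 1) = x"
proof (cases "x = 0")
  case True
  have "(1::nat) < 2^(n+1)" by (rule one_less_power) auto
  then show ?thesis using True by simp
next
  case False
  have "x ^ (2^(n+1)) = (x^(2^n))^2" by (simp add: power_mult[symmetric] mult.commute)
  also have "\<dots> = x * x" using ff_pow_card[OF assms] by (simp add: power2_eq_square)
  finally have e: "x ^ (2^(n+1)) = x * x" .
  have "x ^ (2^(n+1)) = x * x ^ (2^(n+1) - 1)"
    by (metis power_Suc Suc_pred' pos2 zero_less_power)
  with e False show ?thesis by simp
qed

lemma ff_cube_root:
  fixes x :: "'a::{field,finite}"
  assumes "card (UNIV :: 'a set) = 2 ^ n" "odd n"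
  shows "(x ^ ((4::nat)^((n+1) div 2) div 3)) ^ 3 = x"
proof -
  have n0: "n > 0" using assms(2) by (cases n) auto
  have "(x ^ ((4::nat)^((n+1) div 2) div 3)) ^ 3 = x ^ (3 * ((4::nat)^((n+1) div 2) div 3))"
    by (simp add: power_mult[symmetric] mult.commute)
  also have "\<dots> = x" using three_dvd[OF assms(2)] ff_pow_2n1[OF assms(1) n0] by simp
  finally show ?thesis .
qed

lemma ff_no_cubic_unity:
  fixes t :: "'a::{field,finite}"
  assumes "card (UNIV :: 'a set) = 2 ^ n" "odd n"
  shows "t^2 + t + 1 \<noteq> 0"
proof
  assume h: "t^2 + t + 1 = 0"
  have two: "(2::'a) = 0" using ff_char2[OF assms] .
  have "t^3 - 1 = (t - 1) * (t^2 + t + 1)" by (simp add: algebra_simps power2_eq_square power3_eq_cube)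
  then have t3: "t^3 = 1" using h by simp
  have "t = (t ^ ((4::nat)^((n+1) div 2) div 3)) ^ 3" using ff_cube_root[OF assms] by simp
  also have "\<dots> = (t^3) ^ ((4::nat)^((n+1) div 2) div 3)" by (simp add: power_mult[symmetric] mult.commute)
  also have "\<dots> = 1" using t3 by simp
  finally have "t = 1" .
  with h have "(3::'a) = 0" by simp
  then have "(1::'a) + 2 = 0" by simp
  with two show False by simp
qed

lemma W_equiv:
  fixes v w :: "'a::field"
  assumes two: "(2::'a) = 0" and nc: "\<And>t::'a. t^2 + t + 1 \<noteq> 0"
    and v0: "v \<noteq> 0" and v1: "v \<noteq> 1"
  shows "w^3 + w + (v^3 + 1/v^3) = 0 \<longleftrightarrow> w = v + 1/v"
proof -
  define y where "y = w * v"
  define m where "m = v^2 + 1"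
  have m0: "m \<noteq> 0"
  proof
    assume "m = 0"
    then have "(v + 1)^2 = 0" using two unfolding m_def by (simp add: power2_sum)
    then have "v = 1" using c2_minus[OF two, of v 1] by simp
    with v1 show False by simp
  qed
  have e1: "(w^3 + w + (v^3 + 1/v^3)) * v^3 = y^3 + v^2 * y + v^3*v^3 + 1"
    using v0 unfolding y_def by (simp add: field_simps power3_eq_cube power2_eq_square
        flip: power_add)
  have e2: "(y + m) * (y^2 + m*y + m^2 + v^2) = (y^3 + v^2 * y + v^3*v^3 + 1) + 2 * (m*y^2 + m^2*y + 2*(v^2*v^2) + 2*v^2)"
    unfolding m_def by (simp add: algebra_simps power2_eq_square power3_eq_cube
        flip: power_add)
  have e3: "(y + 1)^2 + m * (y + 1) + m^2 = (y^2 + m*y + m^2 + v^2) + 2 * (y + 1)"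
    unfolding m_def by (simp add: algebra_simps power2_eq_square)
  have e2': "(y + m) * (y^2 + m*y + m^2 + v^2) = y^3 + v^2 * y + v^3*v^3 + 1"
    using e2 two by simp
  have "w^3 + w + (v^3 + 1/v^3) = 0 \<longleftrightarrow> (w^3 + w + (v^3 + 1/v^3)) * v^3 = 0"
    using v0 by simp
  also have "\<dots> \<longleftrightarrow> (y + m) * (y^2 + m*y + m^2 + v^2) = 0"
    by (simp only: e1 e2')
  also have "\<dots> \<longleftrightarrow> y + m = 0"
  proof
    assume "(y + m) * (y^2 + m*y + m^2 + v^2) = 0"
    moreover have "y^2 + m*y + m^2 + v^2 \<noteq> 0"
    proof
      assume q: "y^2 + m*y + m^2 + v^2 = 0"
      define t where "t = (y + 1) / m"
      have "(t^2 + t + 1) * m^2 = (y + 1)^2 + m * (y + 1) + m^2"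
        unfolding t_def using m0 by (simp add: field_simps power2_eq_square)
      also have "\<dots> = 0" using e3 q two by simp
      finally show False using nc[of t] m0 by simp
    qed
    ultimately show "y + m = 0" by simp
  qed simp
  also have "\<dots> \<longleftrightarrow> w = v + 1/v"
  proof
    assume "y + m = 0"
    then have "y = m" using c2_minus[OF two] by blast
    then show "w = v + 1/v" using v0 unfolding y_def m_def by (simp add: field_simps power2_eq_square)
  next
    assume "w = v + 1/v"
    then have "y = m" using v0 unfolding y_def m_def by (simp add: field_simps power2_eq_square)
    then show "y + m = 0" using c2_add_self[OF two] by simp
  qed
  finally show ?thesis .
qed


lemma core:
  fixes A B D s :: "'a::field"
  assumes two: "(2::'a) = 0" and AD: "A = D^2" and D0: "D \<noteq> 0" and B0: "B \<noteq> 0"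
  shows "A*(A+1)^2*(B*(s+1)^3 + B*s^3/A + 1)
       = B*D^3*((((A+1)*s+A)/D)^3 + ((A+1)*s+A)/D + (A+B+1)*(1+A)/(B*D))"
proof -
  have A0: "A \<noteq> 0" using AD D0 by simp
  have L: "A*(A+1)^2*(B*(s+1)^3 + B*s^3/A + 1) = (A+1)^2*(A*B*(s+1)^3 + B*s^3 + A)"
    using A0 by (simp add: field_simps)
  have R: "B*D^3*((((A+1)*s+A)/D)^3 + ((A+1)*s+A)/D + (A+B+1)*(1+A)/(B*D))
      = B*((A+1)*s+A)^3 + A*B*((A+1)*s+A) + A*(A+1)*(A+B+1)"
    using D0 B0 unfolding AD by (simp add: field_simps power2_eq_square power3_eq_cube)
  have P: "(A+1)^2*(A*B*(s+1)^3 + B*s^3 + A)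
      = B*((A+1)*s+A)^3 + A*B*((A+1)*s+A) + A*(A+1)*(A+B+1) + 2*(s*A*B*(1+A))"
    by (simp add: algebra_simps power2_eq_square power3_eq_cube)
  show ?thesis using L R P two by simp
qed

lemma powi_cube:
  fixes u :: "'a::{field,finite}"
  assumes card: "card (UNIV :: 'a set) = 2 ^ n" and u0: "u \<noteq> 0"
    and cg: "[3 * d = 2 ^ i + 1] (mod (2 ^ n - 1))"
  shows "(u powi d)^3 = u^(2^i+1)"
proof -
  obtain k where k: "2^i + 1 = 3*d + (2^n - 1)*k" using cg cong_iff_lin by blast
  have c1: "int (2^n - 1) = 2^n - 1" by (simp add: of_nat_diff)
  have dk: "d*3 = int (2^i+1) + int (2^n - 1) * (-k)" using k c1 by simp
  have fe: "u powi int (2^n - 1) = 1"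
    using ff_fermat[OF u0] card by (simp only: power_int_of_nat)
  have "(u powi d)^3 = (u powi d) powi (int 3)" by (simp only: power_int_of_nat)
  also have "\<dots> = u powi (d*3)" by (simp add: power_int_mult)
  also have "\<dots> = u powi int (2^i+1) * (u powi int (2^n - 1)) powi (-k)"
    unfolding dk by (simp only: power_int_add[OF disjI1[OF u0]] power_int_mult)
  also have "\<dots> = u powi int (2^i+1)" by (simp only: fe power_int_1_left mult_1_right)
  also have "\<dots> = u^(2^i+1)" by (rule power_int_of_nat)
  finally show ?thesis .
qed


theorem lemma15:
  fixes u :: "'a::{field,finite}" and n i :: nat and d :: int
  assumes "card (UNIV :: 'a set) = 2 ^ n"
    and "odd n"
    and "i > 0"
    and "coprime i n"
    and "[3 * d = 2 ^ i + 1] (mod (2 ^ n - 1))"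
    and "u \<notin> {0, 1}"
  shows "\<exists>!x::'a. (u powi d * x + (1 + u) powi d) ^ 3 + x ^ 3 + 1 = 0"
proof -
  have n0: "n > 0" using assms(2) by (cases n) auto
  have two: "(2::'a) = 0" using ff_char2 assms(1,2) by blast
  have nc: "\<And>t::'a. t^2 + t + 1 \<noteq> 0" using ff_no_cubic_unity[OF assms(1,2)] by blast
  have u0: "u \<noteq> 0" and u1: "u \<noteq> 1" using assms(6) by auto
  have u1': "1 + u \<noteq> 0" using u1 c2_minus[OF two, of 1 u] by auto
  define q where "q = (2::nat)^i"
  define r where "r = u ^ (2^(n-1))"
  have r2: "r^2 = u"
  proof -
    have "r^2 = u^(2^(n-1)*2)" unfolding r_def by (rule power_mult[symmetric])
    also have "(2::nat)^(n-1)*2 = 2^n" using n0 by (metis power_minus_mult)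
    finally show ?thesis using ff_pow_card[OF assms(1) n0] by simp
  qed
  have r0: "r \<noteq> 0" using r2 u0 by auto
  have r1: "r \<noteq> 1" using r2 u1 by auto
  have r1': "1 + r \<noteq> 0" using r1 c2_minus[OF two, of 1 r] by auto
  define Q where "Q = r ^ q"
  have Q0: "Q \<noteq> 0" using r0 unfolding Q_def by simp
  have frob: "\<And>x y::'a. (x + y)^q = x^q + y^q" unfolding q_def using c2_frob[OF two] by blast
  have Q1: "Q \<noteq> 1"
  proof
    assume "Q = 1"
    then have "(1 + r)^q = 0" using frob[of 1 r] two unfolding Q_def by simp
    then show False using r1' by simp
  qed
  have Q1': "1 + Q \<noteq> 0" using Q1 c2_minus[OF two, of 1 Q] by auto
  have uq: "u^q = Q^2"
  proof -
    have "(r^2)^q = (r^q)^2" by (metis power_mult mult.commute)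
    then show ?thesis using r2 by (simp add: Q_def)
  qed
  have rQ: "r + Q \<noteq> 0"
  proof
    assume "r + Q = 0"
    then have "r ^ (2^i) = r" using c2_minus[OF two, of r Q] unfolding Q_def q_def by auto
    then have "r = 0 \<or> r = 1" using ff_fix[OF assms(1) n0 assms(4)] by blast
    with r0 r1 show False by blast
  qed
  define D where "D = Q * r"
  define A where "A = D^2"
  define B where "B = (1 + Q^2) * (1 + r^2)"
  have D0: "D \<noteq> 0" using Q0 r0 by (simp add: D_def)
  have A0: "A \<noteq> 0" using D0 by (simp add: A_def)
  have A_eq: "u^(2^i+1) = A"
  proof -
    have "u^(2^i+1) = u^q * u" unfolding q_def by simp
    also have "\<dots> = Q^2 * r^2" using uq r2 by simp
    also have "\<dots> = A" by (simp add: A_def D_def power_mult_distrib)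
    finally show ?thesis .
  qed
  have B_eq: "(1+u)^(2^i+1) = B"
  proof -
    have "(1+u)^(2^i+1) = (1+u)^q * (1+u)" unfolding q_def by simp
    also have "\<dots> = (1 + u^q) * (1 + u)" using frob[of 1 u] by simp
    also have "\<dots> = B" unfolding uq B_def r2 ..
    finally show ?thesis .
  qed
  have B0: "B \<noteq> 0" using B_eq u1' by (metis power_not_zero)
  have A1: "A + 1 \<noteq> 0"
  proof
    assume "A + 1 = 0"
    then have "(D + 1)^2 = 0" using c2_sq[OF two, of D 1] unfolding A_def by simp
    then have "D = 1" using c2_minus[OF two, of D 1] by simp
    then have rq: "r^q * r = 1" unfolding D_def Q_def by simp
    then have rqi: "r^q = inverse r" using r0 by (simp add: field_simps)
    have "r ^ (2^(2*i)) = (r^q)^q" unfolding q_def by (simp add: power_mult[symmetric] power_add mult_2)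
    also have "\<dots> = r" unfolding rqi by (simp add: power_inverse rqi)
    finally have "r ^ (2^(2*i)) = r" .
    moreover have "coprime (2*i) n" using assms(2,4) by (simp add: coprime_left_2_iff_odd)
    ultimately have "r = 0 \<or> r = 1" using ff_fix[OF assms(1) n0] by blast
    with r0 r1 show False by blast
  qed
  define C where "C = A + B + 1"
  have C_eq: "C = (r + Q)^2"
  proof -
    have "C = r^2 + Q^2 + 2*(Q^2*r^2 + 1)"
      unfolding C_def A_def B_def D_def by (simp add: algebra_simps power2_eq_square)
    then show ?thesis using two c2_sq[OF two, of r Q] by simp
  qed
  have C0: "C \<noteq> 0" using rQ C_eq by simp
  define c where "c = C * (1 + A) / (B * D)"
  have c0: "c \<noteq> 0" using C0 A1 B0 D0 by (simp add: c_def add.commute)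
  define X where "X = (1+Q)^2 * r"
  define Y where "Y = (1+r)^2 * Q"
  define V where "V = X / Y"
  have X0: "X \<noteq> 0" using Q1' r0 by (simp add: X_def)
  have Y0: "Y \<noteq> 0" using r1' Q0 by (simp add: Y_def)
  have V0: "V \<noteq> 0" using X0 Y0 by (simp add: V_def)
  have cV: "c = V + 1/V"
  proof -
    have s1: "V + 1/V = (X^2 + Y^2)/(X*Y)" using X0 Y0 by (simp add: V_def field_simps power2_eq_square)
    have s2: "X^2 + Y^2 = (X+Y)^2" using c2_sq[OF two] by simp
    have s3: "X + Y = (r+Q)*(1+D) + 2*(2*Q*r)"
      by (simp add: X_def Y_def D_def algebra_simps power2_eq_square)
    have q2: "(1+Q)^2 = 1 + Q^2" using c2_sq[OF two, of 1 Q] by simp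
    have r2': "(1+r)^2 = 1 + r^2" using c2_sq[OF two, of 1 r] by simp
    have s4: "X*Y = B*D" unfolding X_def Y_def q2 r2' B_def D_def by (simp add: algebra_simps)
    have s5: "1 + A = (1+D)^2" using c2_sq[OF two, of 1 D] by (simp add: A_def)
    have "c = ((r+Q)*(1+D))^2 / (B*D)" unfolding c_def C_eq s5 by (simp add: power_mult_distrib)
    also have "\<dots> = (X+Y)^2/(X*Y)" using s3 s4 two by simp
    also have "\<dots> = V + 1/V" using s1 s2 by simp
    finally show ?thesis .
  qed
  define v where "v = V ^ ((4::nat)^((n+1) div 2) div 3)"
  have v3: "v^3 = V" using ff_cube_root[OF assms(1,2)] unfolding v_def by blast
  have v0: "v \<noteq> 0" using v3 V0 by auto
  have v1: "v \<noteq> 1"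
  proof
    assume "v = 1"
    then have "V = 1" using v3 by simp
    then have "c = 0" using cV two by simp
    with c0 show False by simp
  qed
  have cv: "c = v^3 + 1/v^3" using cV v3 by simp
  define a where "a = u powi d"
  define b where "b = (1+u) powi d"
  have a3: "a^3 = A" using powi_cube[OF assms(1) u0 assms(5)] A_eq a_def by simp
  have b3: "b^3 = B" using powi_cube[OF assms(1) u1' assms(5)] B_eq b_def by simp
  have a0: "a \<noteq> 0" using a3 A0 by auto
  have b0: "b \<noteq> 0" using b3 B0 by auto
  define W where "W x = ((A+1)*(a*x/b) + A)/D" for x
  have key: "(a * x + b)^3 + x^3 + 1 = 0 \<longleftrightarrow> W x = v + 1/v" for x
  proof -
    define s where "s = a*x/b"
    have ax: "a * x + b = b * (s + 1)" using b0 by (simp add: s_def field_simps)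
    have xx: "x = b * s / a" using a0 b0 by (simp add: s_def field_simps)
    have "(a * x + b)^3 + x^3 + 1 = B*(s+1)^3 + B*s^3/A + 1"
      unfolding ax a3[symmetric] b3[symmetric] by (subst xx) (simp add: power_mult_distrib power_divide)
    then have "A*(A+1)^2*((a * x + b)^3 + x^3 + 1) = B*D^3*((W x)^3 + W x + c)"
      using core[OF two A_def D0 B0, of s] unfolding W_def s_def c_def C_def by simp
    then have "(a * x + b)^3 + x^3 + 1 = 0 \<longleftrightarrow> (W x)^3 + W x + c = 0"
      using A0 A1 B0 D0 by (metis mult_eq_0_iff power_not_zero)
    also have "\<dots> \<longleftrightarrow> W x = v + 1/v" using W_equiv[OF two nc v0 v1] cv by simp
    finally show ?thesis .
  qed
  define w0 where "w0 = v + 1/v"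
  define N where "N = (D*w0 + A) / (A+1)"
  define x0 where "x0 = (b / a) * N"
  have Wx0: "W x0 = v + 1/v"
  proof -
    have "a * x0 / b = (D*w0 + A) / (A+1)" unfolding x0_def N_def[symmetric] using a0 b0
      by simp
    then have "(A+1) * (a * x0 / b) = D*w0 + A" using A1 by simp
    then have "W x0 = (D*w0 + (A + A))/D" unfolding W_def by (simp add: add.assoc)
    also have "A + A = 0" using c2_add_self[OF two] by simp
    finally show ?thesis using D0 by (simp add: w0_def)
  qed
  have Winj: "x = y" if "W x = W y" for x y
  proof -
    have "(A+1)*(a*x/b) = (A+1)*(a*y/b)" using that D0 unfolding W_def by simp
    then have "a*x/b = a*y/b" using A1 by simp
    then show ?thesis using a0 b0 by simp
  qed
  have "\<exists>!x::'a. (a * x + b) ^ 3 + x ^ 3 + 1 = 0"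
  proof (rule ex1I[of _ x0])
    show "(a * x0 + b) ^ 3 + x0 ^ 3 + 1 = 0" using key Wx0 by simp
  next
    fix y assume "(a * y + b) ^ 3 + y ^ 3 + 1 = 0"
    then have "W y = W x0" using key Wx0 by simp
    then show "y = x0" using Winj by blast
  qed
  then show ?thesis unfolding a_def b_def .
qed

end
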